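(* Let $0\le k,l\le N$ be integers, let $q$ be a nonzero complex number with $q^j\ne1$ for $1\le j\le N$, and let $t\neq0$. Then $$\binom{N}{l}_q\,t^{k}\;{}_3\phi_2\!\left[\begin{matrix}q^{-k},q^{-l},1/t\\ q^{-N},0\end{matrix};q,q\right]=\sum_{P}q^{\|P\|}\,t^{y_k(P)},$$ where the sum is over all lattice paths $P$ from $(0,0)$ to $(l,N-l)$ with unit right and up steps, $\|P\|$ is the sum, over all up steps of $P$, of the $x$-coordinate of the starting point of that step (the number of boxes to the upper left of the path), and $y_k(P)$ is the number of up steps among the first $k$ steps of $P$.
   Context: $(a;q)_k=\prod_{j=0}^{k-1}(1-aq^j)$, $\binom{N}{l}_q=\frac{(q;q)_N}{(q;q)_l(q;q)_{N-l}}$, and ${}_3\phi_2\!\left[\begin{matrix}a_1,a_2,a_3\\ b_1,b_2\end{matrix};q,z\right]=\sum_{j\ge0}\frac{(a_1,a_2,a_3;q)_j}{(q,b_1,b_2;q)_j}z^j$ (terminating; $(0;q)_j=1$). *)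

theory Defs
  imports Complex_Main
begin

definition qpoch :: "complex \<Rightarrow> complex \<Rightarrow> nat \<Rightarrow> complex" where
  "qpoch a q k = (\<Prod>j<k. 1 - a * q ^ j)"

definition qbinom :: "nat \<Rightarrow> nat \<Rightarrow> complex \<Rightarrow> complex" where
  "qbinom N l q = qpoch q q N / (qpoch q q l * qpoch q q (N - l))"

definition phi32 :: "nat \<Rightarrow> complex \<Rightarrow> complex \<Rightarrow> complex \<Rightarrow> complex \<Rightarrow> complex
    \<Rightarrow> complex \<Rightarrow> complex \<Rightarrow> complex" where
  "phi32 M a1 a2 a3 b1 b2 q z =
     (\<Sum>j\<le>M. (qpoch a1 q j * qpoch a2 q j * qpoch a3 q j)
              / (qpoch q q j * qpoch b1 q j * qpoch b2 q j) * z ^ j)"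

text \<open>Lattice paths from (0,0) to (l, N-l): lists of N steps, True = up step,
  False = right step.\<close>
definition lattice_paths :: "nat \<Rightarrow> nat \<Rightarrow> bool list set" where
  "lattice_paths N l = {P. length P = N \<and> length (filter id P) = N - l}"

definition path_norm :: "bool list \<Rightarrow> nat" where
  "path_norm P = (\<Sum>i<length P. if P ! i then length (filter Not (take i P)) else 0)"

definition y_steps :: "nat \<Rightarrow> bool list \<Rightarrow> nat" where
  "y_steps k P = length (filter id (take k P))"

end

theory Submission
  imports Defs
begin


fun gb :: "nat \<Rightarrow> nat \<Rightarrow> complex \<Rightarrow> complex" where
  "gb n 0 q = 1"
| "gb 0 (Suc m) q = 0"
| "gb (Suc n) (Suc m) q = gb n m q + q ^ Suc m * gb n (Suc m) q"

lemma gb_gt: "m > n \<Longrightarrow> gb n m q = 0"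
proof (induction n arbitrary: m)
  case 0 then show ?case by (cases m) auto
next
  case (Suc n) then show ?case by (cases m) auto
qed

lemma gb_nn: "gb n n q = 1"
  by (induction n) (auto simp: gb_gt)

lemma qpoch_0[simp]: "qpoch a q 0 = 1"
  unfolding qpoch_def by simp

lemma qpoch_Suc: "qpoch a q (Suc m) = qpoch a q m * (1 - a * q ^ m)"
  unfolding qpoch_def by simp

lemma qpochq_Suc: "qpoch q q (Suc m) = qpoch q q m * (1 - q ^ Suc m)"
  unfolding qpoch_def by simp

lemma gb_closed: "m \<le> n \<Longrightarrow> gb n m q * qpoch q q m * qpoch q q (n - m) = qpoch q q n"
proof (induction n arbitrary: m)
  case 0 then show ?case by (simp add: qpoch_def)
next
  case (Suc n)
  show ?case
  proof (cases m)
    case 0 then show ?thesis by (simp add: qpoch_def)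
  next
    case (Suc m')
    have m': "m' \<le> n" using Suc.prems Suc by simp
    have A: "gb n m' q * qpoch q q m' * qpoch q q (n - m') = qpoch q q n" using Suc.IH m' by simp
    show ?thesis
    proof (cases "m' = n")
      case True
      then show ?thesis using Suc by (simp add: gb_nn gb_gt qpochq_Suc)
    next
      case False
      then have lt: "m' < n" using m' by simp
      have B: "gb n (Suc m') q * qpoch q q (Suc m') * qpoch q q (n - Suc m') = qpoch q q n"
        using Suc.IH lt by simp
      have e: "n - m' = Suc (n - Suc m')" using lt by simp
      have qe: "q ^ Suc m' * q ^ (n - m') = q ^ Suc n" using lt
        by (metis Suc_diff_le add_Suc le_add_diff_inverse less_imp_le_nat power_add)
      have "gb (Suc n) m q * qpoch q q m * qpoch q q (Suc n - m)
          = gb n m' q * qpoch q q m' * qpoch q q (n - m') * (1 - q ^ Suc m')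
            + q ^ Suc m' * (gb n (Suc m') q * qpoch q q (Suc m') * qpoch q q (n - Suc m')) * (1 - q ^ (n - m'))"
        using Suc by (simp add: qpochq_Suc e algebra_simps)
      also have "\<dots> = qpoch q q n * (1 - q ^ Suc m') + q ^ Suc m' * qpoch q q n * (1 - q ^ (n - m'))"
        using A B by simp
      also have "\<dots> = qpoch q q n * (1 - q ^ Suc m' * q ^ (n - m'))" by (simp add: algebra_simps)
      also have "\<dots> = qpoch q q (Suc n)" using qe by (simp add: qpochq_Suc)
      finally show ?thesis .
    qed
  qed
qed

definition nz :: "complex \<Rightarrow> nat \<Rightarrow> bool" where
  "nz q N \<longleftrightarrow> (\<forall>j. 1 \<le> j \<longrightarrow> j \<le> N \<longrightarrow> q ^ j \<noteq> 1)"

lemma qpoch_nz: "nz q N \<Longrightarrow> m \<le> N \<Longrightarrow> qpoch q q m \<noteq> 0"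
  unfolding qpoch_def nz_def
  by (auto simp: prod_zero_iff) (metis Suc_leI le_trans less_imp_le_nat mult.commute power_Suc One_nat_def Suc_le_mono le0 not_less_eq_eq)

lemma gb_eq: "nz q N \<Longrightarrow> m \<le> n \<Longrightarrow> n \<le> N \<Longrightarrow>
   gb n m q = qpoch q q n / (qpoch q q m * qpoch q q (n - m))"
  using gb_closed[of m n q] qpoch_nz[of q N m] qpoch_nz[of q N "n-m"]
  by (simp add: field_simps)

lemma qbinom_gb: "nz q N \<Longrightarrow> l \<le> N \<Longrightarrow> qbinom N l q = gb N l q"
  unfolding qbinom_def using gb_eq[of q N l N] by simp

lemma gb_dual: assumes "nz q N" "n < N"
  shows "gb (Suc n) (Suc j) q = q ^ (n - j) * gb n j q + gb n (Suc j) q"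
proof -
  consider "j < n" | "j = n" | "j > n" by linarith
  then show ?thesis
  proof cases
    case 1
    have A: "gb n j q * qpoch q q j * qpoch q q (n - j) = qpoch q q n" using gb_closed 1 by simp
    have B: "gb n (Suc j) q * qpoch q q (Suc j) * qpoch q q (n - Suc j) = qpoch q q n"
      using gb_closed 1 by simp
    have e: "n - j = Suc (n - Suc j)" using 1 by simp
    have R: "qpoch q q j * qpoch q q (n - Suc j) \<noteq> 0"
      using qpoch_nz[OF assms(1)] assms(2) 1 by simp
    have "gb n j q * (1 - q ^ (n - j)) * (qpoch q q j * qpoch q q (n - Suc j))
        = gb n (Suc j) q * (1 - q ^ Suc j) * (qpoch q q j * qpoch q q (n - Suc j))"
      using A B unfolding e by (simp add: qpochq_Suc algebra_simps)
    then have C: "gb n j q * (1 - q ^ (n - j)) = gb n (Suc j) q * (1 - q ^ Suc j)"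
      using R by simp
    show ?thesis using C by (simp add: algebra_simps)
  next
    case 2 then show ?thesis by (simp add: gb_nn gb_gt)
  next
    case 3 then show ?thesis by (simp add: gb_gt)
  qed
qed

lemma gb_prod: assumes "nz q N" "j \<le> l" "l \<le> N"
  shows "gb N j q * gb (N - j) (l - j) q = gb N l q * gb l j q"
proof -
  have e: "N - j - (l - j) = N - l" using assms by simp
  show ?thesis
    using assms qpoch_nz[OF assms(1)]
    by (simp add: gb_eq[OF assms(1)] e field_simps)
qed



lemma pow_inv_cancel: "(q::complex) \<noteq> 0 \<Longrightarrow> q ^ a * inverse q ^ a = 1"
  by (simp add: power_mult_distrib[symmetric])

lemma newton: assumes "nz q N" "n \<le> N" "q \<noteq> 0"
  shows "x ^ n = (\<Sum>j\<le>n. gb n j q * inverse q ^ (j * (n - j)) * (\<Prod>i<j. x - inverse q ^ i))"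
  using assms(2)
proof (induction n)
  case 0 then show ?case by simp
next
  case (Suc n)
  define p where "p = inverse q"
  define c where "c n j = gb n j q * p ^ (j * (n - j))" for n j
  define D where "D j = (\<Prod>i<j. x - p ^ i)" for j
  have IH: "x ^ n = (\<Sum>j\<le>n. c n j * D j)" using Suc unfolding c_def D_def p_def by simp
  have xD: "x * D j = D (Suc j) + p ^ j * D j" for j
    unfolding D_def by (simp add: algebra_simps)
  have cS: "c (Suc n) (Suc j) = c n j + p ^ Suc j * c n (Suc j)" if "j \<le> n" for j
  proof -
    have d: "gb (Suc n) (Suc j) q = q ^ (n - j) * gb n j q + gb n (Suc j) q"
      using gb_dual[OF assms(1)] Suc.prems by simp
    have e1: "Suc j * (Suc n - Suc j) = j * (n - j) + (n - j)" by simp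
    have t1: "q ^ (n - j) * p ^ (Suc j * (Suc n - Suc j)) = p ^ (j * (n - j))"
      unfolding e1 power_add using pow_inv_cancel[OF assms(3), of "n-j"] p_def by (simp add: algebra_simps)
    have t2: "gb n (Suc j) q * p ^ (Suc j * (Suc n - Suc j)) = p ^ Suc j * (gb n (Suc j) q * p ^ (Suc j * (n - Suc j)))"
    proof (cases "j = n")
      case True then show ?thesis by (simp add: gb_gt)
    next
      case False
      define r where "r = n - Suc j"
      have "n = Suc j + r" using that False unfolding r_def by simp
      then have "Suc j * (Suc n - Suc j) = Suc j + Suc j * (n - Suc j)" by (simp add: algebra_simps)
      then show ?thesis by (simp add: power_add)
    qed
    show ?thesis unfolding c_def d using t1 t2 by (simp add: algebra_simps)
  qed
  have "x ^ Suc n = (\<Sum>j\<le>n. c n j * D (Suc j)) + (\<Sum>j\<le>n. c n j * p ^ j * D j)"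
  proof -
    have "x ^ Suc n = (\<Sum>j\<le>n. c n j * (x * D j))"
      unfolding power_Suc IH sum_distrib_left by (simp add: algebra_simps)
    also have "\<dots> = (\<Sum>j\<le>n. c n j * D (Suc j) + c n j * p ^ j * D j)"
      unfolding xD by (simp add: algebra_simps)
    finally show ?thesis by (simp add: sum.distrib)
  qed
  also have "(\<Sum>j\<le>n. c n j * p ^ j * D j) = (\<Sum>j\<le>Suc n. c n j * p ^ j * D j)"
    by (simp add: c_def gb_gt)
  also have "\<dots> = 1 + (\<Sum>j\<le>n. p ^ Suc j * c n (Suc j) * D (Suc j))"
    unfolding sum.atMost_Suc_shift by (simp add: c_def D_def algebra_simps)
  also have "(\<Sum>j\<le>n. c n j * D (Suc j)) + (1 + (\<Sum>j\<le>n. p ^ Suc j * c n (Suc j) * D (Suc j)))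
      = 1 + (\<Sum>j\<le>n. c (Suc n) (Suc j) * D (Suc j))"
    by (simp add: cS sum.distrib algebra_simps)
  also have "\<dots> = (\<Sum>j\<le>Suc n. c (Suc n) j * D j)"
    unfolding sum.atMost_Suc_shift by (simp add: c_def D_def)
  finally show ?case unfolding c_def D_def p_def .
qed



definition Q :: "complex \<Rightarrow> complex \<Rightarrow> nat \<Rightarrow> complex" where
  "Q q t j = (\<Prod>i<j. q ^ i * (q ^ i - t))"

lemma pp_sq: "(\<Prod>i<j. (p::complex) ^ i) ^ 2 * p ^ j = p ^ (j * j)"
proof (induction j)
  case 0 then show ?case by simp
next
  case (Suc j)
  have "(\<Prod>i<Suc j. p ^ i) ^ 2 * p ^ Suc j = ((\<Prod>i<j. p ^ i) ^ 2 * p ^ j) * p ^ (j + j + 1)"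
    by (simp add: power2_eq_square power_add algebra_simps)
  also have "\<dots> = p ^ (j * j + (j + j + 1))" using Suc by (simp add: power_add)
  also have "j * j + (j + j + 1) = Suc j * Suc j" by simp
  finally show ?case .
qed

lemma H: assumes "nz q N" "l \<le> N" "q \<noteq> 0" "t \<noteq> 0"
  shows "(\<Sum>j\<le>l. q ^ j * inverse q ^ (j * l) * gb l j q * t ^ (l - j) * Q q t j) = 1"
proof -
  define p where "p = inverse q"
  have pq: "p ^ i * q ^ i = 1" for i unfolding p_def using pow_inv_cancel[OF assms(3)] by (simp add: mult.commute)
  have N: "inverse t ^ l = (\<Sum>j\<le>l. gb l j q * p ^ (j * (l - j)) * (\<Prod>i<j. inverse t - p ^ i))"
    using newton[OF assms(1,2,3)] p_def by simp
  have trm: "t ^ l * (gb l j q * p ^ (j * (l - j)) * (\<Prod>i<j. inverse t - p ^ i))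
      = q ^ j * p ^ (j * l) * gb l j q * t ^ (l - j) * Q q t j" if "j \<le> l" for j
  proof -
    have a: "t ^ l = t ^ (l - j) * t ^ j" using that by (simp add: power_add[symmetric])
    have b: "t ^ j * (\<Prod>i<j. inverse t - p ^ i) = (\<Prod>i<j. 1 - p ^ i * t)"
    proof -
      have "t ^ j * (\<Prod>i<j. inverse t - p ^ i) = (\<Prod>i<j. t * (inverse t - p ^ i))"
        by (simp add: prod.distrib)
      also have "\<dots> = (\<Prod>i<j. 1 - p ^ i * t)"
        by (rule prod.cong) (auto simp: algebra_simps assms(4))
      finally show ?thesis .
    qed
    have c: "(\<Prod>i<j. 1 - p ^ i * t) = (\<Prod>i<j. p ^ i) ^ 2 * Q q t j"
    proof -
      have "(\<Prod>i<j. 1 - p ^ i * t) = (\<Prod>i<j. (p ^ i) ^ 2 * (q ^ i * (q ^ i - t)))"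
      proof (rule prod.cong)
        fix i
        have "(p ^ i) ^ 2 * (q ^ i * (q ^ i - t)) = (p ^ i * q ^ i) * (p ^ i * q ^ i) - (p ^ i * q ^ i) * p ^ i * t"
          by (simp add: power2_eq_square algebra_simps)
        then show "1 - p ^ i * t = (p ^ i) ^ 2 * (q ^ i * (q ^ i - t))" using pq by simp
      qed simp
      then show ?thesis unfolding Q_def by (simp add: prod.distrib prod_power_distrib)
    qed
    have d: "(\<Prod>i<j. p ^ i) ^ 2 = p ^ (j * j) * q ^ j"
    proof -
      have "(\<Prod>i<j. p ^ i) ^ 2 = (\<Prod>i<j. p ^ i) ^ 2 * p ^ j * q ^ j" using pq by (simp add: mult.assoc)
      then show ?thesis using pp_sq by simp
    qed
    have e: "p ^ (j * (l - j)) * p ^ (j * j) = p ^ (j * l)"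
      using that by (simp add: power_add[symmetric] diff_mult_distrib2 algebra_simps)
    have "t ^ l * (gb l j q * p ^ (j * (l - j)) * (\<Prod>i<j. inverse t - p ^ i))
        = t ^ (l - j) * gb l j q * (p ^ (j * (l - j)) * (\<Prod>i<j. p ^ i) ^ 2) * Q q t j"
    proof -
      have "t ^ l * (gb l j q * p ^ (j * (l - j)) * (\<Prod>i<j. inverse t - p ^ i))
          = t ^ (l - j) * gb l j q * p ^ (j * (l - j)) * (t ^ j * (\<Prod>i<j. inverse t - p ^ i))"
        unfolding a by (simp only: ac_simps)
      then show ?thesis unfolding b c by (simp only: ac_simps)
    qed
    also have "\<dots> = t ^ (l - j) * gb l j q * (p ^ (j * (l - j)) * p ^ (j * j)) * q ^ j * Q q t j"
      unfolding d by (simp add: algebra_simps)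
    finally show ?thesis unfolding e by (simp add: algebra_simps)
  qed
  have "1 = t ^ l * inverse t ^ l" using assms(4) by (simp add: power_mult_distrib[symmetric])
  also have "\<dots> = (\<Sum>j\<le>l. t ^ l * (gb l j q * p ^ (j * (l - j)) * (\<Prod>i<j. inverse t - p ^ i)))"
    unfolding N sum_distrib_left ..
  also have "\<dots> = (\<Sum>j\<le>l. q ^ j * p ^ (j * l) * gb l j q * t ^ (l - j) * Q q t j)"
    by (rule sum.cong) (auto simp: trm)
  finally show ?thesis unfolding p_def by simp
qed



definition trm :: "complex \<Rightarrow> complex \<Rightarrow> nat \<Rightarrow> nat \<Rightarrow> nat \<Rightarrow> nat \<Rightarrow> complex" where
  "trm q t N l k j = (if j \<le> l then q ^ (j * (N + 1)) * inverse q ^ (j * (l + k)) * gb k j q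
      * gb (N - j) (l - j) q * t ^ (k - j) * Q q t j else 0)"

definition G :: "complex \<Rightarrow> complex \<Rightarrow> nat \<Rightarrow> nat \<Rightarrow> nat \<Rightarrow> complex" where
  "G q t N l k = (\<Sum>j\<le>k. trm q t N l k j)"

lemma G0: "G q t N l 0 = gb N l q"
  unfolding G_def trm_def by (simp add: Q_def)

lemma GN: assumes "nz q N" "l \<le> N" "q \<noteq> 0" "t \<noteq> 0"
  shows "G q t N l N = t ^ (N - l) * gb N l q"
proof -
  define p where "p = inverse q"
  have pq: "q ^ i * p ^ i = 1" for i unfolding p_def using pow_inv_cancel[OF assms(3)] by simp
  have "G q t N l N = (\<Sum>j\<in>{j\<in>{..N}. j \<le> l}. q ^ (j * (N + 1)) * p ^ (j * (l + N)) * gb N j q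
      * gb (N - j) (l - j) q * t ^ (N - j) * Q q t j)"
    unfolding G_def trm_def p_def by (subst sum.inter_filter) auto
  also have "{j\<in>{..N}. j \<le> l} = {..l}" using assms(2) by auto
  also have "(\<Sum>j\<le>l. q ^ (j * (N + 1)) * p ^ (j * (l + N)) * gb N j q
      * gb (N - j) (l - j) q * t ^ (N - j) * Q q t j)
    = (\<Sum>j\<le>l. t ^ (N - l) * gb N l q * (q ^ j * p ^ (j * l) * gb l j q * t ^ (l - j) * Q q t j))"
  proof (rule sum.cong)
    fix j assume "j \<in> {..l}"
    then have j: "j \<le> l" by simp
    have a: "t ^ (N - j) = t ^ (N - l) * t ^ (l - j)" using j assms(2) by (simp add: power_add[symmetric])
    have b: "q ^ (j * (N + 1)) * p ^ (j * (l + N)) = q ^ j * p ^ (j * l) * (q ^ (j * N) * p ^ (j * N))"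
      by (simp add: power_add algebra_simps)
    show "q ^ (j * (N + 1)) * p ^ (j * (l + N)) * gb N j q * gb (N - j) (l - j) q * t ^ (N - j) * Q q t j
      = t ^ (N - l) * gb N l q * (q ^ j * p ^ (j * l) * gb l j q * t ^ (l - j) * Q q t j)"
    proof -
      have b': "q ^ (j * (N + 1)) * p ^ (j * (l + N)) = q ^ j * p ^ (j * l)" using b pq by simp
      have "q ^ (j * (N + 1)) * p ^ (j * (l + N)) * gb N j q * gb (N - j) (l - j) q * t ^ (N - j) * Q q t j
         = (q ^ (j * (N + 1)) * p ^ (j * (l + N))) * (gb N j q * gb (N - j) (l - j) q) * t ^ (N - j) * Q q t j"
        by (simp only: ac_simps)
      also have "\<dots> = (q ^ j * p ^ (j * l)) * (gb N l q * gb l j q) * (t ^ (N - l) * t ^ (l - j)) * Q q t j"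
        unfolding b' gb_prod[OF assms(1) j assms(2)] a ..
      finally show ?thesis by (simp only: ac_simps)
    qed
  qed simp
  also have "\<dots> = t ^ (N - l) * gb N l q"
    using H[OF assms] unfolding p_def by (simp add: sum_distrib_left[symmetric])
  finally show ?thesis .
qed

lemma trm_rec: assumes "q \<noteq> 0" "j \<le> n"
  shows "trm q t (Suc n) l k j = q ^ l * trm q t n l k j + (if l = 0 then 0 else trm q t n (l - 1) k j)"
proof -
  define p where "p = inverse q"
  have pq: "q ^ i * p ^ i = 1" for i unfolding p_def using pow_inv_cancel[OF assms(1)] by simp
  define X where "X = gb k j q * t ^ (k - j) * Q q t j"
  consider "j > l" | "j = l" | "j < l" by linarith
  then show ?thesis
  proof cases
    case 1 then show ?thesis unfolding trm_def by auto
  next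
    case 2
    have e: "q ^ (l * (Suc n + 1)) = q ^ l * q ^ (l * (n + 1))" by (simp add: power_add[symmetric])
    have z: "(if l = 0 then 0 else trm q t n (l - 1) k j) = 0" using 2 unfolding trm_def by auto
    have "trm q t (Suc n) l k j = q ^ (l * (Suc n + 1)) * p ^ (l * (l + k)) * X"
      unfolding trm_def X_def p_def using 2 by (simp add: algebra_simps)
    also have "\<dots> = q ^ l * (q ^ (l * (n + 1)) * p ^ (l * (l + k)) * X)" unfolding e by (simp only: ac_simps)
    also have "\<dots> = q ^ l * trm q t n l k j"
      unfolding trm_def X_def p_def using 2 by (simp add: algebra_simps)
    finally show ?thesis using z by simp
  next
    case 3
    then obtain m where l: "l = Suc m" and jm: "j \<le> m" by (cases l) auto
    have g: "gb (Suc n - j) (l - j) q = gb (n - j) (m - j) q + q ^ (l - j) * gb (n - j) (l - j) q"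
    proof -
      have "Suc n - j = Suc (n - j)" "l - j = Suc (m - j)" using assms(2) jm l by auto
      then show ?thesis by simp
    qed
    have e1: "q ^ (j * (Suc n + 1)) * p ^ (j * (l + k)) = q ^ (j * (n + 1)) * p ^ (j * (m + k))"
    proof -
      have "q ^ (j * (Suc n + 1)) * p ^ (j * (l + k)) = q ^ (j * (n + 1)) * p ^ (j * (m + k)) * (q ^ j * p ^ j)"
        unfolding l by (simp add: power_add algebra_simps)
      then show ?thesis using pq by simp
    qed
    have e2: "q ^ (j * (Suc n + 1)) * q ^ (l - j) = q ^ l * q ^ (j * (n + 1))"
    proof -
      have "j * (Suc n + 1) + (l - j) = l + j * (n + 1)" using 3 by simp
      then show ?thesis by (simp only: power_add[symmetric])
    qed
    have "trm q t (Suc n) l k j = q ^ (j * (Suc n + 1)) * p ^ (j * (l + k)) * X * gb (Suc n - j) (l - j) q"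
      unfolding trm_def X_def p_def using 3 by (simp add: algebra_simps)
    also have "\<dots> = (q ^ (j * (Suc n + 1)) * p ^ (j * (l + k))) * X * gb (n - j) (m - j) q
        + (q ^ (j * (Suc n + 1)) * q ^ (l - j)) * p ^ (j * (l + k)) * X * gb (n - j) (l - j) q"
      unfolding g by (simp add: algebra_simps)
    also have "\<dots> = q ^ (j * (n + 1)) * p ^ (j * (m + k)) * X * gb (n - j) (m - j) q
        + q ^ l * (q ^ (j * (n + 1)) * p ^ (j * (l + k)) * X * gb (n - j) (l - j) q)"
      unfolding e1 e2 by (simp add: algebra_simps)
    also have "\<dots> = q ^ l * trm q t n l k j + (if l = 0 then 0 else trm q t n (l - 1) k j)"
      unfolding trm_def X_def p_def using 3 jm l by (simp add: algebra_simps)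
    finally show ?thesis .
  qed
qed

lemma G_rec: assumes "q \<noteq> 0" "k \<le> n"
  shows "G q t (Suc n) l k = q ^ l * G q t n l k + (if l = 0 then 0 else G q t n (l - 1) k)"
  unfolding G_def using trm_rec[OF assms(1)] assms(2)
  by (simp add: sum_distrib_left sum.distrib)



definition F :: "complex \<Rightarrow> complex \<Rightarrow> nat \<Rightarrow> nat \<Rightarrow> nat \<Rightarrow> complex" where
  "F q t N l k = (\<Sum>P\<in>lattice_paths N l. q ^ path_norm P * t ^ y_steps k P)"

lemma finite_lp: "finite (lattice_paths N l)"
proof -
  have "lattice_paths N l \<subseteq> {xs. set xs \<subseteq> (UNIV::bool set) \<and> length xs = N}"
    unfolding lattice_paths_def by auto
  moreover have "finite {xs. set xs \<subseteq> (UNIV::bool set) \<and> length xs = N}"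
    by (rule finite_lists_length_eq) simp
  ultimately show ?thesis by (rule finite_subset)
qed

lemma pn_snoc: "path_norm (P @ [b]) = path_norm P + (if b then length (filter Not P) else 0)"
proof -
  have "path_norm (P @ [b]) = (\<Sum>i<Suc (length P). if (P @ [b]) ! i then length (filter Not (take i (P @ [b]))) else 0)"
    unfolding path_norm_def by simp
  also have "\<dots> = (\<Sum>i<length P. if (P @ [b]) ! i then length (filter Not (take i (P @ [b]))) else 0)
      + (if b then length (filter Not P) else 0)"
    by (simp add: nth_append)
  also have "(\<Sum>i<length P. if (P @ [b]) ! i then length (filter Not (take i (P @ [b]))) else 0) = path_norm P"
    unfolding path_norm_def by (rule sum.cong) (auto simp: nth_append)
  finally show ?thesis .
qed

lemma ys_snoc: "k \<le> length P \<Longrightarrow> y_steps k (P @ [b]) = y_steps k P"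
  unfolding y_steps_def by simp

lemma len_not: "length (filter Not P) = length P - length (filter id P)"
proof -
  have "length (filter id P) + length (filter (\<lambda>x. \<not> id x) P) = length P"
    by (rule sum_length_filter_compl)
  then show ?thesis by (simp add: comp_def)
qed

lemma lp_snoc_iff: "P @ [b] \<in> lattice_paths (Suc n) l \<longleftrightarrow>
   length P = n \<and> (if b then Suc (length (filter id P)) = Suc n - l else length (filter id P) = Suc n - l)"
  unfolding lattice_paths_def by auto

lemma lp_split: assumes "l \<le> Suc n"
  shows "sum f (lattice_paths (Suc n) l) =
    (if l \<le> n then sum (\<lambda>P. f (P @ [True])) (lattice_paths n l) else 0)
    + (if l = 0 then 0 else sum (\<lambda>P. f (P @ [False])) (lattice_paths n (l - 1)))"
proof -
  define A where "A = lattice_paths (Suc n) l"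
  have ne: "P \<noteq> []" if "P \<in> A" for P using that unfolding A_def lattice_paths_def by auto
  have 1: "A \<inter> {P. last P} = (\<lambda>P. P @ [True]) ` {P \<in> lattice_paths n l. l \<le> n}"
  proof (intro equalityI subsetI)
    fix P assume P: "P \<in> A \<inter> {P. last P}"
    then obtain P' b where e: "P = P' @ [b]" using ne rev_exhaust by blast
    then have b: "b" using P by simp
    have "P' @ [True] \<in> lattice_paths (Suc n) l" using P e b A_def by simp
    then have "length P' = n" "Suc (length (filter id P')) = Suc n - l" unfolding lp_snoc_iff by auto
    then have "P' \<in> {P \<in> lattice_paths n l. l \<le> n}" unfolding lattice_paths_def by auto
    then show "P \<in> (\<lambda>P. P @ [True]) ` {P \<in> lattice_paths n l. l \<le> n}" using e b by blast
  next
    fix P assume "P \<in> (\<lambda>P. P @ [True]) ` {P \<in> lattice_paths n l. l \<le> n}"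
    then show "P \<in> A \<inter> {P. last P}" unfolding A_def lattice_paths_def by auto
  qed
  have 2: "A - {P. last P} = (\<lambda>P. P @ [False]) ` {P \<in> lattice_paths n (l - 1). l \<noteq> 0}"
  proof (intro equalityI subsetI)
    fix P assume P: "P \<in> A - {P. last P}"
    then obtain P' b where e: "P = P' @ [b]" using ne rev_exhaust by blast
    then have b: "\<not> b" using P by simp
    have "P' @ [False] \<in> lattice_paths (Suc n) l" using P e b A_def by simp
    then have "length P' = n" "length (filter id P') = Suc n - l" unfolding lp_snoc_iff by auto
    moreover have "length (filter id P') \<le> n" using \<open>length P' = n\<close> by (metis length_filter_le)
    ultimately have "P' \<in> {P \<in> lattice_paths n (l - 1). l \<noteq> 0}" unfolding lattice_paths_def by auto
    then show "P \<in> (\<lambda>P. P @ [False]) ` {P \<in> lattice_paths n (l - 1). l \<noteq> 0}" using e b by blast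
  next
    fix P assume "P \<in> (\<lambda>P. P @ [False]) ` {P \<in> lattice_paths n (l - 1). l \<noteq> 0}"
    then show "P \<in> A - {P. last P}" unfolding A_def lattice_paths_def using assms by auto
  qed
  have inj: "inj (\<lambda>P. P @ [c])" for c :: bool by (rule injI) simp
  have "sum f A = sum f (A \<inter> {P. last P}) + sum f (A - {P. last P})"
    by (rule sum.Int_Diff) (simp add: A_def finite_lp)
  also have "sum f (A \<inter> {P. last P}) = (if l \<le> n then sum (\<lambda>P. f (P @ [True])) (lattice_paths n l) else 0)"
    unfolding 1 by (subst sum.reindex) (auto intro: inj_on_subset[OF inj])
  also have "sum f (A - {P. last P}) = (if l = 0 then 0 else sum (\<lambda>P. f (P @ [False])) (lattice_paths n (l - 1)))"
    unfolding 2 by (subst sum.reindex) (auto intro: inj_on_subset[OF inj])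
  finally show ?thesis unfolding A_def .
qed

lemma F_rec: assumes "k \<le> n" "l \<le> Suc n"
  shows "F q t (Suc n) l k = (if l \<le> n then q ^ l * F q t n l k else 0)
     + (if l = 0 then 0 else F q t n (l - 1) k)"
proof -
  have a: "(\<Sum>P\<in>lattice_paths n l. q ^ path_norm (P @ [True]) * t ^ y_steps k (P @ [True]))
      = q ^ l * F q t n l k" if "l \<le> n"
    unfolding F_def sum_distrib_left
  proof (rule sum.cong)
    fix P assume "P \<in> lattice_paths n l"
    then have "length P = n" "length (filter id P) = n - l" unfolding lattice_paths_def by auto
    then have "length (filter Not P) = l" using that len_not[of P] by simp
    then show "q ^ path_norm (P @ [True]) * t ^ y_steps k (P @ [True]) = q ^ l * (q ^ path_norm P * t ^ y_steps k P)"
      using \<open>length P = n\<close> assms(1) by (simp add: pn_snoc ys_snoc power_add)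
  qed simp
  have b: "(\<Sum>P\<in>lattice_paths n (l - 1). q ^ path_norm (P @ [False]) * t ^ y_steps k (P @ [False]))
      = F q t n (l - 1) k"
    unfolding F_def
  proof (rule sum.cong)
    fix P assume "P \<in> lattice_paths n (l - 1)"
    then have "length P = n" unfolding lattice_paths_def by auto
    then show "q ^ path_norm (P @ [False]) * t ^ y_steps k (P @ [False]) = q ^ path_norm P * t ^ y_steps k P"
      using assms(1) by (simp add: pn_snoc ys_snoc)
  qed simp
  have "F q t (Suc n) l k =
    (if l \<le> n then (\<Sum>P\<in>lattice_paths n l. q ^ path_norm (P @ [True]) * t ^ y_steps k (P @ [True])) else 0)
    + (if l = 0 then 0 else (\<Sum>P\<in>lattice_paths n (l - 1). q ^ path_norm (P @ [False]) * t ^ y_steps k (P @ [False])))"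
    unfolding F_def by (rule lp_split[OF assms(2)])
  moreover have "(if l \<le> n then (\<Sum>P\<in>lattice_paths n l. q ^ path_norm (P @ [True]) * t ^ y_steps k (P @ [True])) else 0)
     = (if l \<le> n then q ^ l * F q t n l k else 0)" using a by simp
  moreover have "(if l = 0 then 0 else (\<Sum>P\<in>lattice_paths n (l - 1). q ^ path_norm (P @ [False]) * t ^ y_steps k (P @ [False])))
     = (if l = 0 then 0 else F q t n (l - 1) k)" using b by simp
  ultimately show ?thesis by simp
qed

lemma F_N: "F q t N l N = t ^ (N - l) * F q t N l 0"
  unfolding F_def sum_distrib_left
  by (rule sum.cong) (auto simp: lattice_paths_def y_steps_def)

lemma F_00: "F q t 0 0 0 = 1"
proof -
  have "lattice_paths 0 0 = {[]}" unfolding lattice_paths_def by auto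
  then show ?thesis unfolding F_def by (simp add: path_norm_def y_steps_def)
qed



lemma G_gt: assumes "N < l" "k \<le> N" shows "G q t N l k = 0"
  unfolding G_def trm_def using assms by (auto intro!: sum.neutral simp: gb_gt)

lemma nz_mono: "nz q (Suc n) \<Longrightarrow> nz q n"
  unfolding nz_def by auto

lemma FG: assumes "nz q N" "q \<noteq> 0" "t \<noteq> 0"
  shows "l \<le> N \<Longrightarrow> k \<le> N \<Longrightarrow> F q t N l k = G q t N l k"
  using assms(1)
proof (induction N arbitrary: l k)
  case 0 then show ?case by (simp add: F_00 G0)
next
  case (Suc n)
  have nzn: "nz q n" using nz_mono Suc.prems(3) by blast
  have lo: "F q t (Suc n) l' k' = G q t (Suc n) l' k'" if "k' \<le> n" "l' \<le> Suc n" for l' k'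
  proof (cases "l' \<le> n")
    case True
    have "F q t n l' k' = G q t n l' k'" using Suc.IH[OF True that(1) nzn] .
    moreover have "l' \<noteq> 0 \<Longrightarrow> F q t n (l' - 1) k' = G q t n (l' - 1) k'"
      using Suc.IH[OF _ that(1) nzn] True by simp
    ultimately show ?thesis using F_rec[OF that] G_rec[OF assms(2) that(1)] True by simp
  next
    case False
    then have l: "l' = Suc n" using that by simp
    have "F q t n n k' = G q t n n k'" using Suc.IH[OF _ that(1) nzn] by simp
    moreover have "G q t n l' k' = 0" using G_gt that l by simp
    ultimately show ?thesis using F_rec[OF that] G_rec[OF assms(2) that(1)] l by simp
  qed
  show ?case
  proof (cases "k \<le> n")
    case True then show ?thesis using lo Suc.prems by simp
  next
    case False
    then have k: "k = Suc n" using Suc.prems by simp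
    have "F q t (Suc n) l k = t ^ (Suc n - l) * F q t (Suc n) l 0" unfolding k by (rule F_N)
    also have "\<dots> = t ^ (Suc n - l) * gb (Suc n) l q" using lo[of 0 l] Suc.prems G0 by simp
    also have "\<dots> = G q t (Suc n) l k" unfolding k using GN[OF Suc.prems(3) Suc.prems(1) assms(2,3)] by simp
    finally show ?thesis .
  qed
qed

lemma prod_cmul: "(\<Prod>i<j. c * f i) = (c::complex) ^ j * (\<Prod>i<j. f i)"
  by (simp add: prod.distrib)

definition ff :: "complex \<Rightarrow> nat \<Rightarrow> nat \<Rightarrow> complex" where
  "ff q n j = (\<Prod>i<j. 1 - q ^ (n - i))"

definition qq :: "complex \<Rightarrow> nat \<Rightarrow> complex" where
  "qq q j = (\<Prod>i<j. q ^ i)"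

lemma L1: assumes "j \<le> n" "q \<noteq> 0"
  shows "qpoch (inverse (q ^ n)) q j = (-1) ^ j * inverse q ^ (n * j) * qq q j * ff q n j"
proof -
  have "(-1) ^ j * inverse q ^ (n * j) * qq q j * ff q n j = (\<Prod>i<j. (-1) * inverse q ^ n * q ^ i * (1 - q ^ (n - i)))"
  proof -
    have "(\<Prod>i<j. (-1) * inverse q ^ n * q ^ i * (1 - q ^ (n - i)))
       = (\<Prod>i<j. ((-1) * inverse q ^ n) * (q ^ i * (1 - q ^ (n - i))))" by (simp only: ac_simps)
    also have "\<dots> = ((-1) * inverse q ^ n) ^ j * ((\<Prod>i<j. q ^ i) * (\<Prod>i<j. 1 - q ^ (n - i)))"
      by (subst prod_cmul) (simp only: prod.distrib)
    finally have X: "(\<Prod>i<j. (-1) * inverse q ^ n * q ^ i * (1 - q ^ (n - i)))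
       = ((-1) * inverse q ^ n) ^ j * (qq q j * ff q n j)" unfolding qq_def ff_def .
    have pw: "((-1) * inverse q ^ n) ^ j = (-1::complex) ^ j * inverse q ^ (n * j)"
      by (metis power_mult power_mult_distrib)
    show ?thesis unfolding X pw by (simp only: mult.assoc)
  qed
  also have "\<dots> = (\<Prod>i<j. 1 - inverse (q ^ n) * q ^ i)"
  proof (rule prod.cong)
    fix i assume "i \<in> {..<j}"
    then have "q ^ i * q ^ (n - i) = q ^ n" using assms(1) by (simp add: power_add[symmetric])
    then have h0: "inverse (q ^ n) * (q ^ i * q ^ (n - i)) = 1" using assms(2) by simp
    have h: "q ^ i * (inverse (q ^ n) * q ^ (n - i)) = 1" using h0 by (simp only: ac_simps)
    show "(-1) * inverse q ^ n * q ^ i * (1 - q ^ (n - i)) = 1 - inverse (q ^ n) * q ^ i"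
      using assms(2) by (simp add: algebra_simps power_inverse h)
  qed simp
  finally show ?thesis unfolding qpoch_def by simp
qed

lemma L1z: assumes "n < j" "q \<noteq> 0" shows "qpoch (inverse (q ^ n)) q j = 0"
proof -
  show "qpoch (inverse (q ^ n)) q j = 0" unfolding qpoch_def
    using assms
    apply (subst prod_zero_iff)
     apply simp
    apply (rule bexI[of _ n])
     apply (auto simp: power_inverse assms)
    done
qed

lemma L2: "j \<le> n \<Longrightarrow> ff q n j * qpoch q q (n - j) = qpoch q q n"
proof (induction j)
  case 0 then show ?case by (simp add: ff_def)
next
  case (Suc j)
  have e: "n - j = Suc (n - Suc j)" using Suc.prems by simp
  have "ff q n (Suc j) * qpoch q q (n - Suc j) = ff q n j * (qpoch q q (n - Suc j) * (1 - q ^ Suc (n - Suc j)))"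
    unfolding ff_def using e by simp
  also have "\<dots> = ff q n j * qpoch q q (n - j)" unfolding e qpochq_Suc ..
  finally show ?case using Suc by simp
qed

lemma L3: assumes "t \<noteq> 0" shows "(-1) ^ j * qq q j * qpoch (1 / t) q j * t ^ j = Q q t j"
proof -
  have "(-1) ^ j * qq q j * qpoch (1 / t) q j * t ^ j = (\<Prod>i<j. (-1) * q ^ i * (1 - 1 / t * q ^ i) * t)"
  proof -
    have "(\<Prod>i<j. (-1) * q ^ i * (1 - 1 / t * q ^ i) * t) = (\<Prod>i<j. (-1) * (q ^ i * ((1 - 1 / t * q ^ i) * t)))"
      by (simp only: ac_simps)
    also have "\<dots> = (-1) ^ j * ((\<Prod>i<j. q ^ i) * ((\<Prod>i<j. 1 - 1 / t * q ^ i) * t ^ j))"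
      unfolding prod_cmul prod.distrib by simp
    finally show ?thesis unfolding qq_def qpoch_def by (simp only: ac_simps)
  qed
  also have "\<dots> = Q q t j" unfolding Q_def
    by (rule prod.cong) (auto simp: algebra_simps assms)
  finally show ?thesis .
qed

lemma L4: "qpoch 0 q j = 1" unfolding qpoch_def by simp



lemma conv: assumes nz: "nz q N" and q: "q \<noteq> 0" and t: "t \<noteq> 0" and kN: "k \<le> N" and lN: "l \<le> N" and jk: "j \<le> k"
  shows "qbinom N l q * t ^ k * (qpoch (inverse (q ^ k)) q j * qpoch (inverse (q ^ l)) q j * qpoch (1 / t) q j
      / (qpoch q q j * qpoch (inverse (q ^ N)) q j * qpoch 0 q j) * q ^ j) = trm q t N l k j"
proof (cases "j \<le> l")
  case False
  then show ?thesis using L1z[of l j q] q unfolding trm_def by simp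
next
  case True
  define a where "a = qpoch q q"
  define p where "p = inverse q"
  have anz: "m \<le> N \<Longrightarrow> a m \<noteq> 0" for m unfolding a_def using qpoch_nz[OF nz] by simp
  have jN: "j \<le> N" using jk kN by simp
  have f1: "ff q k j = gb k j q * a j"
  proof -
    have "ff q k j * a (k - j) = gb k j q * a j * a (k - j)"
      using L2[OF jk] gb_closed[OF jk] unfolding a_def by simp
    then show ?thesis using anz[of "k - j"] kN by simp
  qed
  have f2: "ff q l j = a l / a (l - j)" using L2[OF True] anz[of "l - j"] lN unfolding a_def by (simp add: field_simps)
  have f3: "ff q N j = a N / a (N - j)" using L2[OF jN] anz[of "N - j"] unfolding a_def by (simp add: field_simps)
  have f4: "gb (N - j) (l - j) q = a (N - j) / (a (l - j) * a (N - l))"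
    using gb_eq[OF nz, of "l - j" "N - j"] True lN unfolding a_def by simp
  have qqnz: "qq q j \<noteq> 0" unfolding qq_def using q by simp
  have f5: "qpoch (1 / t) q j = Q q t j / ((-1) ^ j * qq q j * t ^ j)"
    using L3[OF t, of j q] qqnz t by (simp add: field_simps)
  have qb: "qbinom N l q = a N / (a l * a (N - l))" unfolding qbinom_def a_def ..
  have e1: "t ^ k = t ^ (k - j) * t ^ j" using jk by (simp add: power_add[symmetric])
  have e2: "q ^ (j * (N + 1)) = q ^ (N * j) * q ^ j" by (simp add: power_add algebra_simps)
  have e3: "p ^ (j * (l + k)) = p ^ (k * j) * p ^ (l * j)" by (simp add: power_add algebra_simps)
  have e4: "p ^ (N * j) = inverse (q ^ (N * j))" unfolding p_def by (simp add: power_inverse)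
  have trm': "trm q t N l k j = q ^ (N * j) * q ^ j * (p ^ (k * j) * p ^ (l * j)) * gb k j q * gb (N - j) (l - j) q * t ^ (k - j) * Q q t j"
    unfolding trm_def using True e2 e3 p_def by simp
  have LHS: "qbinom N l q * t ^ k * (qpoch (inverse (q ^ k)) q j * qpoch (inverse (q ^ l)) q j * qpoch (1 / t) q j
      / (qpoch q q j * qpoch (inverse (q ^ N)) q j * qpoch 0 q j) * q ^ j)
    = a N / (a l * a (N - l)) * (t ^ (k - j) * t ^ j) * (((-1) ^ j * p ^ (k * j) * qq q j * (gb k j q * a j))
       * ((-1) ^ j * p ^ (l * j) * qq q j * (a l / a (l - j))) * (Q q t j / ((-1) ^ j * qq q j * t ^ j))
       / (a j * ((-1) ^ j * inverse (q ^ (N * j)) * qq q j * (a N / a (N - j))) * 1) * q ^ j)"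
    unfolding qb e1 L1[OF jk q] L1[OF True q] L1[OF jN q] L4 f5 f1 f2 f3 a_def[symmetric] p_def[symmetric] e4
    by (simp only: mult.commute[of N j] mult.commute[of k j] mult.commute[of l j])
  show ?thesis unfolding LHS trm' f4
    using anz[of N] anz[of l] anz[of "N - l"] anz[of j] anz[of "l - j"] anz[of "N - j"] lN jN qqnz t q
    by (simp add: field_simps)
qed


theorem mainTheorem11:
  fixes N k l :: nat and q t :: complex
  assumes "k \<le> N" and "l \<le> N"
    and "q \<noteq> 0" and "\<And>j. 1 \<le> j \<Longrightarrow> j \<le> N \<Longrightarrow> q ^ j \<noteq> 1"
    and "t \<noteq> 0"
  shows "qbinom N l q * t ^ k *
           phi32 k (inverse (q ^ k)) (inverse (q ^ l)) (1 / t) (inverse (q ^ N)) 0 q q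
         = (\<Sum>P\<in>lattice_paths N l. q ^ path_norm P * t ^ y_steps k P)"
proof -
  have nz: "nz q N" unfolding nz_def using assms(4) by blast
  have "qbinom N l q * t ^ k *
           phi32 k (inverse (q ^ k)) (inverse (q ^ l)) (1 / t) (inverse (q ^ N)) 0 q q
      = (\<Sum>j\<le>k. qbinom N l q * t ^ k * (qpoch (inverse (q ^ k)) q j * qpoch (inverse (q ^ l)) q j * qpoch (1 / t) q j
      / (qpoch q q j * qpoch (inverse (q ^ N)) q j * qpoch 0 q j) * q ^ j))"
    unfolding phi32_def sum_distrib_left ..
  also have "\<dots> = G q t N l k"
    unfolding G_def by (rule sum.cong[OF refl], rule conv[OF nz assms(3) assms(5) assms(1) assms(2)]) simp
  also have "\<dots> = F q t N l k" using FG[OF nz assms(3) assms(5) assms(2) assms(1)] by simp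
  finally show ?thesis unfolding F_def .
qed

end
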